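(* Let $\mu$ be a doubling measure on $\mathbb{R}^d$, $\Omega\subset\mathbb{R}^d$ a bounded convex domain, $r:\Omega\to(0,+\infty)$ an admissible radius function in $\Omega$ satisfying $|r(x)-r(y)|\leq|x-y|$ for all $x,y\in\Omega$, $0\leq\alpha<1$, $u\in C(\overline{\Omega})$, and $G$ a proper convex subdomain of $\Omega$ with $\overline{G}\subset\Omega$ compact. There are constants $C>0$ and $0<\theta\leq1$, depending only on $\mu$ and $d$, such that for all $x,y\in G$, $$|T_\alpha u(x)-T_\alpha u(y)| \leq \alpha\, \omega_{u,\widetilde{G}}(|x-y|) + (1-\alpha)\,C\,\|u\|_\infty\Big(\frac{|x-y|}{r(x)}\Big)^{\theta},$$ where $\widetilde{G}$ is the convex hull of $\bigcup_{x\in G}B_x$. In particular, if $r(x)\geq t_1>0$ for all $x\in G$, then $$\omega_{T_\alpha u, G}(t) \leq \alpha\,\omega_{u,\widetilde{G}}(t) + (1-\alpha)\,C\,\|u\|_\infty\, t_1^{-\theta} t^{\theta} \quad \text{for } 0\leq t\leq \operatorname{diam}(G).$$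
   Context: A doubling measure on $\mathbb{R}^d$ is a positive Borel measure $\mu$ with $0<\mu(B)<\infty$ for every open ball $B$ and $\mu(B(a,2s))\leq D\mu(B(a,s))$ for some $D\geq1$ and all $a$, $s>0$. An admissible radius function in $\Omega$ is $r:\Omega\to(0,\infty)$ with $0<r(x)\leq\operatorname{dist}(x,\partial\Omega)$; $B_x=B(x,r(x))$ (open ball). For $x\in\Omega$: $Su(x)=\frac12(\sup_{B_x}u+\inf_{B_x}u)$, $Mu(x)=\frac{1}{\mu(B_x)}\int_{B_x}u\,d\mu$, and $T_\alpha=\alpha S+(1-\alpha)M$. A concave modulus of continuity is a non-decreasing concave $\omega:[0,\infty)\to[0,\infty)$ with $\omega(0)=0$; for a convex set $E$ and a function $v$ continuous on $E$, $\omega_{v,E}$ denotes the lowest concave modulus of continuity of $v$ on $E$, so that $|v(x)-v(y)|\leq\omega_{v,E}(|x-y|)$ for $x,y\in E$. *)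

theory Defs
  imports "HOL-Analysis.Analysis" "HOL-Probability.Probability"
begin

definition doubling_measure :: "'a::euclidean_space measure \<Rightarrow> bool" where
  "doubling_measure mu \<longleftrightarrow>
     sets mu = sets borel \<and>
     (\<forall>a s. s > 0 \<longrightarrow> 0 < emeasure mu (ball a s) \<and> emeasure mu (ball a s) < \<infinity>) \<and>
     (\<exists>D::real. D \<ge> 1 \<and> (\<forall>a s. s > 0 \<longrightarrow>
         emeasure mu (ball a (2 * s)) \<le> ennreal D * emeasure mu (ball a s)))"

definition admissible_radius :: "'a::euclidean_space set \<Rightarrow> ('a \<Rightarrow> real) \<Rightarrow> bool" where
  "admissible_radius Omega r \<longleftrightarrow>
     (\<forall>x\<in>Omega. 0 < r x \<and> r x \<le> infdist x (frontier Omega))"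

definition S_op :: "('a::euclidean_space \<Rightarrow> real) \<Rightarrow> ('a \<Rightarrow> real) \<Rightarrow> 'a \<Rightarrow> real" where
  "S_op r u x = (Sup (u ` ball x (r x)) + Inf (u ` ball x (r x))) / 2"

definition M_op :: "'a::euclidean_space measure \<Rightarrow> ('a \<Rightarrow> real) \<Rightarrow> ('a \<Rightarrow> real) \<Rightarrow> 'a \<Rightarrow> real" where
  "M_op mu r u x = (1 / measure mu (ball x (r x))) * set_lebesgue_integral mu (ball x (r x)) u"

definition T_op :: "'a::euclidean_space measure \<Rightarrow> ('a \<Rightarrow> real) \<Rightarrow> real \<Rightarrow> ('a \<Rightarrow> real) \<Rightarrow> 'a \<Rightarrow> real" where
  "T_op mu r \<alpha> u x = \<alpha> * S_op r u x + (1 - \<alpha>) * M_op mu r u x"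

definition concave_modulus :: "(real \<Rightarrow> real) \<Rightarrow> bool" where
  "concave_modulus w \<longleftrightarrow> mono_on {0..} w \<and> concave_on {0..} w \<and> w 0 = 0 \<and>
      (\<forall>t\<ge>0. w t \<ge> 0)"

text \<open>Lowest concave modulus of continuity of v on E (pointwise infimum of all
  concave moduli of continuity of v on E; this infimum is itself one).\<close>
definition lowest_modulus :: "('a::euclidean_space \<Rightarrow> real) \<Rightarrow> 'a set \<Rightarrow> real \<Rightarrow> real" where
  "lowest_modulus v E t = Inf {w t | w. concave_modulus w \<and>
      (\<forall>x\<in>E. \<forall>y\<in>E. \<bar>v x - v y\<bar> \<le> w (dist x y))}"

definition sup_norm_on :: "'a set \<Rightarrow> ('a \<Rightarrow> real) \<Rightarrow> real" where
  "sup_norm_on A u = Sup ((\<lambda>x. \<bar>u x\<bar>) ` A)"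

end

theory Submission
  imports Defs
begin

lemma maximal_separated:
  fixes K :: "'a::metric_space set"
  assumes "compact K" "0 < s"
  shows "\<exists>Z. finite Z \<and> Z \<subseteq> K \<and> (\<forall>z\<in>Z. \<forall>z'\<in>Z. z \<noteq> z' \<longrightarrow> s \<le> dist z z')
           \<and> (\<forall>p\<in>K. \<exists>z\<in>Z. dist p z < s)"
proof -
  have cov: "K \<subseteq> (\<Union>c\<in>K. ball c (s/2))" using assms(2) by auto
  obtain T where T: "T \<subseteq> K" "finite T" "K \<subseteq> (\<Union>c\<in>T. ball c (s/2))"
    using compactE_image[OF assms(1) open_ball cov] by blast
  define P where "P Z \<longleftrightarrow> finite Z \<and> Z \<subseteq> K \<and> (\<forall>z\<in>Z. \<forall>z'\<in>Z. z \<noteq> z' \<longrightarrow> s \<le> dist z z')" for Z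
  have bnd: "card Z < Suc (card T)" if "P Z" for Z
  proof -
    have "\<forall>z\<in>Z. \<exists>c\<in>T. z \<in> ball c (s/2)"
    proof
      fix z assume "z \<in> Z"
      then have "z \<in> K" using that unfolding P_def by blast
      then show "\<exists>c\<in>T. z \<in> ball c (s/2)" using T(3) by blast
    qed
    then obtain g where g: "\<And>z. z \<in> Z \<Longrightarrow> g z \<in> T \<and> z \<in> ball (g z) (s/2)" by metis
    have "inj_on g Z"
    proof (rule inj_onI)
      fix z z' assume "z \<in> Z" "z' \<in> Z" "g z = g z'"
      have a: "dist z (g z) < s/2" using g[of z] \<open>z \<in> Z\<close> by (simp add: dist_commute)
      have b: "dist z' (g z) < s/2" using g[of z'] \<open>z' \<in> Z\<close> \<open>g z = g z'\<close> by (simp add: dist_commute)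
      have "dist z z' < s" by (rule dist_triangle_half_l[OF a b])
      moreover have "\<forall>z\<in>Z. \<forall>z'\<in>Z. z \<noteq> z' \<longrightarrow> s \<le> dist z z'" using that unfolding P_def by blast
      ultimately show "z = z'" using \<open>z \<in> Z\<close> \<open>z' \<in> Z\<close> by (meson leD)
    qed
    then have "card Z \<le> card T" using g T(2) by (intro card_inj_on_le) auto
    then show ?thesis by simp
  qed
  have "P {}" unfolding P_def by simp
  have bnd': "\<forall>y. P y \<longrightarrow> card y < Suc (card T)" using bnd by blast
  obtain Z where Z: "P Z" "\<forall>Y. P Y \<longrightarrow> card Y \<le> card Z"
    using ex_has_greatest_nat[OF \<open>P {}\<close> bnd'] by blast
  have Zf: "finite Z" and ZK: "Z \<subseteq> K" and Zs: "\<forall>z\<in>Z. \<forall>z'\<in>Z. z \<noteq> z' \<longrightarrow> s \<le> dist z z'"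
    using Z(1) unfolding P_def by auto
  have "\<forall>p\<in>K. \<exists>z\<in>Z. dist p z < s"
  proof (rule ccontr)
    assume "\<not> ?thesis"
    then obtain p where p1: "p \<in> K" and p2: "\<forall>z\<in>Z. \<not> dist p z < s" by blast
    have p3: "s \<le> dist p z" if "z \<in> Z" for z using p2 that by force
    have "p \<notin> Z" using p3[of p] assms(2) by auto
    have "\<forall>z\<in>insert p Z. \<forall>z'\<in>insert p Z. z \<noteq> z' \<longrightarrow> s \<le> dist z z'"
      using Zs p3 by (auto simp: dist_commute)
    then have "P (insert p Z)" using Zf ZK p1 unfolding P_def by auto
    then have "card (insert p Z) \<le> card Z" using Z(2) by blast
    moreover have "card (insert p Z) = Suc (card Z)" using Zf \<open>p \<notin> Z\<close> by simp
    ultimately show False by simp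
  qed
  then show ?thesis using Zf ZK Zs by blast
qed

lemma dist_line: fixes x v :: "'a::real_normed_vector"
  shows "dist (x + a *\<^sub>R v) (x + b *\<^sub>R v) = \<bar>a - b\<bar> * norm v"
proof -
  have "(x + a *\<^sub>R v) - (x + b *\<^sub>R v) = (a - b) *\<^sub>R v" by (simp add: algebra_simps)
  then show ?thesis by (simp add: dist_norm)
qed

lemma dist_line0: fixes x v :: "'a::real_normed_vector"
  shows "dist x (x + a *\<^sub>R v) = \<bar>a\<bar> * norm v"
  using dist_line[of x 0 v a] by simp

locale dbl =
  fixes mu :: "'a::euclidean_space measure" and Dc :: real
  assumes sets_eq: "sets mu = sets borel"
  and fin: "\<And>a s. emeasure mu (ball a s) < \<infinity>"
  and pos: "\<And>a s. s > 0 \<Longrightarrow> 0 < measure mu (ball a s)"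
  and D1: "1 \<le> Dc"
  and dbl: "\<And>a s. measure mu (ball a (2 * s)) \<le> Dc * measure mu (ball a s)"
begin

lemma borel_sets[measurable]: "S \<in> sets borel \<Longrightarrow> S \<in> sets mu"
  using sets_eq by simp

lemma ball_sets[measurable]: "ball a s \<in> sets mu"
  using sets_eq by simp

lemma bounded_fmeas: assumes "bounded S" "S \<in> sets borel" shows "S \<in> fmeasurable mu"
proof -
  obtain a e where "S \<subseteq> ball a e" using assms(1) bounded_subset_ballD by blast
  then have "emeasure mu S \<le> emeasure mu (ball a e)" by (intro emeasure_mono) auto
  then have "emeasure mu S < \<infinity>" using fin[of a e] by (meson le_less_trans)
  then show ?thesis using assms(2) by (auto simp: fmeasurable_def)
qed

lemma ball_fmeas: "ball a s \<in> fmeasurable mu"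
  by (rule bounded_fmeas) auto

lemma mono_meas: "A \<subseteq> B \<Longrightarrow> A \<in> sets borel \<Longrightarrow> bounded B \<Longrightarrow> B \<in> sets borel \<Longrightarrow> measure mu A \<le> measure mu B"
  by (intro measure_mono_fmeasurable bounded_fmeas) auto

lemma dbl_pow: "measure mu (ball a (2^k * s)) \<le> Dc^k * measure mu (ball a s)"
proof (induction k)
  case 0 then show ?case by simp
next
  case (Suc k)
  have "measure mu (ball a (2^Suc k * s)) = measure mu (ball a (2 * (2^k * s)))" by (simp add: mult.assoc)
  also have "\<dots> \<le> Dc * measure mu (ball a (2^k * s))" by (rule dbl)
  also have "\<dots> \<le> Dc * (Dc^k * measure mu (ball a s))" using Suc D1 by (intro mult_left_mono) auto
  finally show ?case by simp
qed

lemma shell_compare: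
  assumes s: "0 < s" "4 * s \<le> R"
  shows "measure mu (ball x R - ball x (R-s)) \<le> Dc^4 * measure mu (ball x (R-s) - ball x (R-2 * s))"
proof -
  define \<rho> where "\<rho> = R - s/2"
  have \<rho>pos: "0 < \<rho>" using s unfolding \<rho>_def by simp
  obtain Z where Zf: "finite Z" and ZS: "Z \<subseteq> sphere x \<rho>"
    and Zs: "\<forall>z\<in>Z. \<forall>z'\<in>Z. z \<noteq> z' \<longrightarrow> s \<le> dist z z'"
    and Zc: "\<forall>p\<in>sphere x \<rho>. \<exists>z\<in>Z. dist p z < s"
    using maximal_separated[OF compact_sphere s(1), of x \<rho>] by (elim exE conjE) simp
  define l where "l = (R - 3/2 * s)/\<rho>"
  have lr: "l * \<rho> = R - 3/2 * s" using \<rho>pos by (simp add: l_def)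
  have l: "1/2 \<le> l" "l \<le> 1"
  proof -
    have "1/2 * \<rho> \<le> l * \<rho>" using lr s \<rho>_def by linarith
    then show "1/2 \<le> l" using \<rho>pos by (rule mult_right_le_imp_le)
    have "l * \<rho> \<le> 1 * \<rho>" using lr s \<rho>_def by linarith
    then show "l \<le> 1" using \<rho>pos by (rule mult_right_le_imp_le)
  qed
  define w where "w z = x + l *\<^sub>R (z - x)" for z
  have nz: "norm (z - x) = \<rho>" if "z \<in> Z" for z
    using ZS that by (auto simp: dist_norm norm_minus_commute)
  have distw: "dist z (w z) = s" if "z \<in> Z" for z
  proof -
    have "dist z (w z) = dist (x + 1 *\<^sub>R (z - x)) (x + l *\<^sub>R (z - x))" by (simp add: w_def)
    also have "\<dots> = (1 - l) * \<rho>" unfolding dist_line using l nz[OF that] by simp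
    also have "\<dots> = \<rho> - l * \<rho>" by (simp add: algebra_simps)
    also have "\<dots> = s" using lr \<rho>_def by linarith
    finally show ?thesis .
  qed
  have distxw: "dist x (w z) = R - 3/2 * s" if "z \<in> Z" for z
  proof -
    have "dist x (w z) = l * \<rho>" unfolding w_def dist_line0 using l nz[OF that] by simp
    then show ?thesis using lr by simp
  qed
  have cover: "ball x R - ball x (R-s) \<subseteq> (\<Union>z\<in>Z. ball z (2 * s))"
  proof
    fix p assume p: "p \<in> ball x R - ball x (R-s)"
    define d where "d = dist x p"
    have d: "R - s \<le> d" "d < R" using p unfolding d_def by auto
    have dpos: "0 < d" using d s by simp
    have nd: "norm (p - x) = d" unfolding d_def by (simp add: dist_norm norm_minus_commute)
    define q where "q = x + (\<rho>/d) *\<^sub>R (p - x)"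
    have "dist x q = \<rho>" unfolding q_def dist_line0 nd using dpos \<rho>pos by simp
    then have "q \<in> sphere x \<rho>" by simp
    then obtain z where z: "z \<in> Z" "dist q z < s" using Zc by blast
    have "dist p q = dist (x + 1 *\<^sub>R (p - x)) (x + (\<rho>/d) *\<^sub>R (p - x))" by (simp add: q_def)
    also have "\<dots> = \<bar>1 - \<rho>/d\<bar> * d" unfolding dist_line nd by simp
    also have "\<dots> = \<bar>(1 - \<rho>/d) * d\<bar>" using dpos by (simp add: abs_mult)
    also have "(1 - \<rho>/d) * d = d - \<rho>" using dpos by (simp add: left_diff_distrib)
    also have "\<bar>d - \<rho>\<bar> \<le> s/2" using d \<rho>_def by (intro abs_leI) linarith+
    finally have "dist p q \<le> s/2" .
    then have "dist p z < 2 * s" using z(2) dist_triangle[of p z q] s by linarith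
    then show "p \<in> (\<Union>z\<in>Z. ball z (2 * s))" using z(1) by (auto simp: dist_commute)
  qed
  have inner: "(\<Union>z\<in>Z. ball (w z) (s/4)) \<subseteq> ball x (R-s) - ball x (R-2 * s)"
  proof
    fix q assume "q \<in> (\<Union>z\<in>Z. ball (w z) (s/4))"
    then obtain z where z: "z \<in> Z" "dist (w z) q < s/4" by auto
    have "dist x q \<le> dist x (w z) + dist (w z) q" by (rule dist_triangle)
    moreover have "dist x (w z) \<le> dist x q + dist (w z) q" using dist_triangle[of x "w z" q] by (simp add: dist_commute)
    ultimately show "q \<in> ball x (R-s) - ball x (R-2 * s)" using distxw[OF z(1)] z(2) by auto
  qed
  have disj: "disjoint_family_on (\<lambda>z. ball (w z) (s/4)) Z"
    unfolding disjoint_family_on_def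
  proof (intro ballI impI)
    fix z z' assume zz: "z \<in> Z" "z' \<in> Z" "z \<noteq> z'"
    have "dist (w z) (w z') = l * dist z z'"
    proof -
      have "w z - w z' = l *\<^sub>R (z - z')" by (simp add: w_def algebra_simps)
      then show ?thesis using l by (simp add: dist_norm)
    qed
    moreover have "s \<le> dist z z'" using Zs zz by blast
    ultimately have "1/2 * s \<le> l * dist z z'" using l s by (intro mult_mono) auto
    then have sd: "s/2 \<le> dist (w z) (w z')" using \<open>dist (w z) (w z') = l * dist z z'\<close> by simp
    show "ball (w z) (s/4) \<inter> ball (w z') (s/4) = {}"
    proof (rule equals0I)
      fix q assume "q \<in> ball (w z) (s/4) \<inter> ball (w z') (s/4)"
      then have q: "dist (w z) q < s/4" "dist q (w z') < s/4" by (auto simp: dist_commute)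
      have "dist (w z) (w z') \<le> dist (w z) q + dist q (w z')" by (rule dist_triangle)
      then show False using q sd by linarith
    qed
  qed
  have each: "measure mu (ball z (2 * s)) \<le> Dc^4 * measure mu (ball (w z) (s/4))" if "z \<in> Z" for z
  proof -
    have "ball z (2 * s) \<subseteq> ball (w z) (2^4 * (s/4))"
    proof
      fix q assume "q \<in> ball z (2 * s)"
      then have "dist z q < 2 * s" by simp
      moreover have "dist (w z) z = s" using distw[OF that] by (simp add: dist_commute)
      moreover have "dist (w z) q \<le> dist (w z) z + dist z q" by (rule dist_triangle)
      ultimately have "dist (w z) q < 4 * s" using s by linarith
      then show "q \<in> ball (w z) (2^4 * (s/4))" by simp
    qed
    then have "measure mu (ball z (2 * s)) \<le> measure mu (ball (w z) (2^4 * (s/4)))"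
      by (intro mono_meas) auto
    also have "\<dots> \<le> Dc^4 * measure mu (ball (w z) (s/4))" by (rule dbl_pow)
    finally show ?thesis .
  qed
  have "measure mu (ball x R - ball x (R-s)) \<le> measure mu (\<Union>z\<in>Z. ball z (2 * s))"
    using cover Zf by (intro mono_meas) auto
  also have "\<dots> \<le> (\<Sum>z\<in>Z. measure mu (ball z (2 * s)))"
    using Zf by (intro measure_UNION_le) auto
  also have "\<dots> \<le> (\<Sum>z\<in>Z. Dc^4 * measure mu (ball (w z) (s/4)))"
    using each by (intro sum_mono) auto
  also have "\<dots> = Dc^4 * measure mu (\<Union>z\<in>Z. ball (w z) (s/4))"
    using Zf disj fin by (simp add: sum_distrib_left measure_finite_Union image_subset_iff less_top[symmetric])
  also have "\<dots> \<le> Dc^4 * measure mu (ball x (R-s) - ball x (R-2 * s))"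
    using inner D1 Zf by (intro mult_left_mono mono_meas) auto
  finally show ?thesis .
qed

end

context dbl begin

lemma shell_eq: assumes "0 \<le> s" shows "measure mu (ball x R - ball x (R - s)) = measure mu (ball x R) - measure mu (ball x (R - s))"
proof -
  have "emeasure mu (ball x R) \<noteq> \<infinity>" using fin[of x R] by simp
  then show ?thesis using assms by (intro measure_Diff) auto
qed

lemma shell_le: "measure mu (ball x R - ball x (R - s)) \<le> measure mu (ball x R)"
  by (intro mono_meas) auto

lemma annular_decay:
  "\<exists>\<theta>. 0 < \<theta> \<and> \<theta> \<le> 1 \<and> (\<forall>x R s. 0 < s \<longrightarrow> s \<le> R \<longrightarrow>
      measure mu (ball x R - ball x (R - s)) \<le> 4 * (s/R) powr \<theta> * measure mu (ball x R))"
proof -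
  define E where "E = Dc^4"
  have E: "1 \<le> E" using D1 unfolding E_def by simp
  define c where "c = E / (1 + E)"
  have c: "0 < c" "c < 1" using E unfolding c_def by auto
  define \<theta> where "\<theta> = min 1 (- log 2 c)"
  have lc: "log 2 c < 0" using c by simp
  have th: "0 < \<theta>" "\<theta> \<le> 1" using lc unfolding \<theta>_def by auto
  have c2: "c * 2 powr \<theta> \<le> 1"
  proof -
    have "2 powr \<theta> \<le> 2 powr (- log 2 c)" unfolding \<theta>_def by (intro powr_mono) auto
    also have "\<dots> = 1 / c" using c by (simp add: powr_minus_divide)
    finally show ?thesis using c by (simp add: field_simps)
  qed
  have main: "measure mu (ball x R - ball x (R - s)) \<le> 4 * (s/R) powr \<theta> * measure mu (ball x R)"
    if "0 < s" "s \<le> R" for x R s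
  proof -
    define a where "a t = measure mu (ball x R - ball x (R - t))" for t
    define m where "m = measure mu (ball x R)"
    have m0: "0 \<le> m" unfolding m_def by simp
    have Rpos: "0 < R" using that by simp
    have base: "a t \<le> 4 * (t/R) powr \<theta> * m" if "0 < t" "t \<le> R" "R \<le> 4 * t" for t
    proof -
      have "1/4 \<le> t/R" using that Rpos by (simp add: field_simps)
      have "t/R \<le> (t/R) powr \<theta>"
        using powr_mono'[of \<theta> 1 "t/R"] th that Rpos by simp
      then have "1 \<le> 4 * (t/R) powr \<theta>" using \<open>1/4 \<le> t/R\<close> by linarith
      then have "1 * m \<le> 4 * (t/R) powr \<theta> * m" using m0 by (rule mult_right_mono)
      moreover have "a t \<le> m" unfolding a_def m_def by (rule shell_le)
      ultimately show ?thesis by linarith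
    qed
    have stepc: "a t \<le> c * a (2 * t)" if "0 < t" "4 * t \<le> R" for t
    proof -
      have "a t \<le> E * measure mu (ball x (R-t) - ball x (R - 2 * t))"
        unfolding a_def E_def using shell_compare[OF that] .
      also have "measure mu (ball x (R-t) - ball x (R - 2 * t)) = a (2 * t) - a t"
      proof -
        have "ball x (R - t - t) = ball x (R - 2 * t)" by (simp add: algebra_simps)
        then have "measure mu (ball x (R-t) - ball x (R - 2 * t)) = measure mu (ball x (R-t)) - measure mu (ball x (R - 2 * t))"
          using shell_eq[of t x "R - t"] that by simp
        moreover have "a (2 * t) = m - measure mu (ball x (R - 2 * t))" unfolding a_def m_def
          using shell_eq[of "2 * t" x R] that by simp
        moreover have "a t = m - measure mu (ball x (R - t))" unfolding a_def m_def
          using shell_eq[of t x R] that by simp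
        ultimately show ?thesis by simp
      qed
      finally have "a t \<le> E * (a (2 * t) - a t)" .
      then have "(1 + E) * a t \<le> E * a (2 * t)" by (simp add: algebra_simps)
      then show ?thesis unfolding c_def using E by (simp add: field_simps)
    qed
    have ind: "\<forall>t. 0 < t \<longrightarrow> t \<le> R \<longrightarrow> R \<le> 2^n * t \<longrightarrow> a t \<le> 4 * (t/R) powr \<theta> * m" for n
    proof (induction n)
      case 0
      show ?case
      proof (intro allI impI)
        fix t assume t: "0 < t" "t \<le> R" "R \<le> 2^0 * t"
        then have "R \<le> 4 * t" by simp
        then show "a t \<le> 4 * (t/R) powr \<theta> * m" by (rule base[OF t(1) t(2)])
      qed
    next
      case (Suc n)
      show ?case
      proof (intro allI impI)
        fix t assume t: "0 < t" "t \<le> R" "R \<le> 2^Suc n * t"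
        show "a t \<le> 4 * (t/R) powr \<theta> * m"
        proof (cases "R \<le> 4 * t")
          case True then show ?thesis by (rule base[OF t(1) t(2)])
        next
          case False
          then have t4: "4 * t \<le> R" by simp
          have "R \<le> 2^n * (2 * t)" using t(3) by (simp add: algebra_simps)
          then have ih: "a (2 * t) \<le> 4 * ((2 * t)/R) powr \<theta> * m" using Suc.IH t t4 by simp
          have "(2 * t)/R = 2 * (t/R)" by simp
          then have "((2 * t)/R) powr \<theta> = 2 powr \<theta> * (t/R) powr \<theta>"
            by (simp only: powr_mult)
          then have "a t \<le> c * (4 * (2 powr \<theta> * (t/R) powr \<theta>) * m)"
            using stepc[OF t(1) t4] ih c by (smt (verit) mult_left_mono)
          also have "\<dots> = (c * 2 powr \<theta>) * (4 * (t/R) powr \<theta> * m)" by (simp add: algebra_simps)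
          also have "\<dots> \<le> 1 * (4 * (t/R) powr \<theta> * m)"
            using c2 m0 by (intro mult_right_mono) auto
          finally show ?thesis by simp
        qed
      qed
    qed
    obtain n where "R / s \<le> real n" using real_arch_simple by blast
    then have "R / s \<le> 2^n" using of_nat_less_two_power[of n, where 'a=real] by linarith
    then have "R \<le> 2^n * s" using that by (simp add: field_simps)
    then have "a s \<le> 4 * (s/R) powr \<theta> * m" using ind that by blast
    then show ?thesis unfolding a_def m_def .
  qed
  show ?thesis using th main by blast
qed

end

lemma frac_diff_bound:
  fixes I1 I2 m1 m2 M d :: real
  assumes "0 < m1" "0 < m2" "\<bar>I1 - I2\<bar> \<le> M * d" "\<bar>I2\<bar> \<le> M * m2" "\<bar>m1 - m2\<bar> \<le> d" "0 \<le> M"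
  shows "\<bar>1/m1 * I1 - 1/m2 * I2\<bar> \<le> 2 * M * d / m1"
proof -
  have eq: "1/m1 * I1 - 1/m2 * I2 = (I1 - I2)/m1 + I2 * (1/m1 - 1/m2)"
    by (simp add: diff_divide_distrib right_diff_distrib)
  have f: "1/m1 - 1/m2 = (m2 - m1)/(m1 * m2)"
    using assms(1,2) by (simp add: diff_frac_eq)
  have a: "\<bar>(I1 - I2)/m1\<bar> \<le> M * d / m1"
  proof -
    have "\<bar>(I1 - I2)/m1\<bar> = \<bar>I1 - I2\<bar>/m1" using assms(1) by (simp add: abs_divide)
    also have "\<dots> \<le> M * d / m1" using assms(1,3) by (simp add: divide_right_mono)
    finally show ?thesis .
  qed
  have "\<bar>I2 * (1/m1 - 1/m2)\<bar> = \<bar>I2\<bar> * \<bar>m1 - m2\<bar> / (m1 * m2)"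
    unfolding f using assms(1,2) by (simp add: abs_mult abs_divide abs_minus_commute)
  also have "\<dots> \<le> (M * m2) * d / (m1 * m2)"
    using assms(1,2,4,5) by (intro divide_right_mono mult_mono) auto
  also have "(M * m2) * d / (m1 * m2) = M * d / m1" using assms(2) by simp
  finally have b: "\<bar>I2 * (1/m1 - 1/m2)\<bar> \<le> M * d / m1" .
  have "\<bar>1/m1 * I1 - 1/m2 * I2\<bar> \<le> \<bar>(I1 - I2)/m1\<bar> + \<bar>I2 * (1/m1 - 1/m2)\<bar>"
    unfolding eq by (rule abs_triangle_ineq)
  also have "\<dots> \<le> M * d / m1 + M * d / m1" using a b by simp
  also have "\<dots> = 2 * M * d / m1" by simp
  finally show ?thesis .
qed

context dbl begin

lemma space_mu: "space mu = UNIV"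
  using sets_eq_imp_space_eq[OF sets_eq] by simp

lemma int_diff_bound:
  fixes u :: "'a \<Rightarrow> real"
  assumes iA: "set_integrable mu A u" and iB: "set_integrable mu B u"
    and A: "A \<in> sets borel" "bounded A" and B: "B \<in> sets borel" "bounded B"
    and bnd: "\<And>z. z \<in> A \<union> B \<Longrightarrow> \<bar>u z\<bar> \<le> M"
  shows "\<bar>(LINT z:A|mu. u z) - (LINT z:B|mu. u z)\<bar> \<le> M * measure mu ((A - B) \<union> (B - A))"
proof -
  define Dl where "Dl = (A - B) \<union> (B - A)"
  have Dl: "Dl \<in> sets mu" "emeasure mu Dl < \<infinity>"
    using bounded_fmeas[of Dl] A B unfolding Dl_def by (auto simp: fmeasurable_def)
  have i1: "integrable mu (\<lambda>z. indicator A z *\<^sub>R u z)" using iA by (simp add: set_integrable_def)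
  have i2: "integrable mu (\<lambda>z. indicator B z *\<^sub>R u z)" using iB by (simp add: set_integrable_def)
  have i3: "integrable mu (\<lambda>z. M * indicator Dl z)"
    using Dl by (intro integrable_mult_right integrable_real_indicator) auto
  have "(LINT z:A|mu. u z) - (LINT z:B|mu. u z) = (LINT z|mu. indicator A z *\<^sub>R u z - indicator B z *\<^sub>R u z)"
    unfolding set_lebesgue_integral_def using i1 i2 by (simp add: integral_diff)
  also have "\<bar>\<dots>\<bar> \<le> (LINT z|mu. M * indicator Dl z)"
  proof (rule integral_abs_bound_integral)
    show "integrable mu (\<lambda>z. indicator A z *\<^sub>R u z - indicator B z *\<^sub>R u z)" using i1 i2 by simp
    show "integrable mu (\<lambda>z. M * indicator Dl z)" by (rule i3)
    fix z
    show "\<bar>indicator A z *\<^sub>R u z - indicator B z *\<^sub>R u z\<bar> \<le> M * indicator Dl z"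
      using bnd[of z] unfolding Dl_def by (cases "z \<in> A"; cases "z \<in> B") (auto simp: indicator_def)
  qed
  also have "\<dots> = M * measure mu Dl" using Dl by (simp add: space_mu)
  finally show ?thesis unfolding Dl_def .
qed

lemma int_bound:
  fixes u :: "'a \<Rightarrow> real"
  assumes iA: "set_integrable mu A u" and A: "A \<in> sets borel" "bounded A"
    and bnd: "\<And>z. z \<in> A \<Longrightarrow> \<bar>u z\<bar> \<le> M"
  shows "\<bar>LINT z:A|mu. u z\<bar> \<le> M * measure mu A"
  using int_diff_bound[OF iA _ A, of "{}" M] bnd by (simp add: set_integrable_def set_lebesgue_integral_def)

lemma meas_diff_bound:
  assumes A: "A \<in> sets borel" "bounded A" and B: "B \<in> sets borel" "bounded B"
  shows "\<bar>measure mu A - measure mu B\<bar> \<le> measure mu ((A - B) \<union> (B - A))"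
proof -
  have c: "(LINT z:S|mu. (1::real)) = measure mu S" if "S \<in> sets borel" "bounded S" for S
    using bounded_fmeas[OF that(2,1)] by (simp add: set_lebesgue_integral_def space_mu fmeasurable_def)
  have ii: "set_integrable mu S (\<lambda>_. 1::real)" if "S \<in> sets borel" "bounded S" for S
    using bounded_fmeas[OF that(2,1)] unfolding set_integrable_def
    by (intro integrableI_bounded_set_indicator[where B=1]) (auto simp: fmeasurable_def)
  have "\<bar>(LINT z:A|mu. (1::real)) - (LINT z:B|mu. 1)\<bar> \<le> 1 * measure mu ((A - B) \<union> (B - A))"
    by (rule int_diff_bound[OF ii[OF A] ii[OF B] A B]) simp
  then show ?thesis using c[OF A] c[OF B] by simp
qed

end

context dbl begin

lemma M_diff:
  fixes u :: "'a \<Rightarrow> real"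
  assumes th: "0 < \<theta>" "\<theta> \<le> 1"
  and AD: "\<forall>x R s. 0 < s \<longrightarrow> s \<le> R \<longrightarrow> measure mu (ball x R - ball x (R - s)) \<le> 4 * (s/R) powr \<theta> * measure mu (ball x R)"
  and r: "0 < r1" "0 < r2" "\<bar>r1 - r2\<bar> \<le> dist x y"
  and i1: "set_integrable mu (ball x r1) u" and i2: "set_integrable mu (ball y r2) u"
  and bnd: "\<And>z. z \<in> ball x r1 \<union> ball y r2 \<Longrightarrow> \<bar>u z\<bar> \<le> M"
  shows "\<bar>1 / measure mu (ball x r1) * (LINT z:ball x r1|mu. u z) - 1 / measure mu (ball y r2) * (LINT z:ball y r2|mu. u z)\<bar>
    \<le> 32 * Dc * M * (dist x y / r1) powr \<theta>"
proof -
  define t where "t = dist x y"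
  define A where "A = ball x r1"
  define B where "B = ball y r2"
  define m1 where "m1 = measure mu A"
  define m2 where "m2 = measure mu B"
  define I1 where "I1 = (LINT z:A|mu. u z)"
  define I2 where "I2 = (LINT z:B|mu. u z)"
  define dl where "dl = measure mu ((A - B) \<union> (B - A))"
  have m1: "0 < m1" unfolding m1_def A_def using pos r by simp
  have m2: "0 < m2" unfolding m2_def B_def using pos r by simp
  have M0: "0 \<le> M" using bnd[of x] r(1) by force
  have bI1: "\<bar>I1\<bar> \<le> M * m1" unfolding I1_def m1_def A_def
    by (rule int_bound[OF i1]) (auto intro: bnd)
  have bI2: "\<bar>I2\<bar> \<le> M * m2" unfolding I2_def m2_def B_def
    by (rule int_bound[OF i2]) (auto intro: bnd)
  have dI: "\<bar>I1 - I2\<bar> \<le> M * dl" unfolding I1_def I2_def dl_def A_def B_def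
    by (rule int_diff_bound[OF i1 i2]) (auto intro: bnd)
  have dm: "\<bar>m1 - m2\<bar> \<le> dl" unfolding m1_def m2_def dl_def A_def B_def
    by (rule meas_diff_bound) auto
  have key: "\<bar>1/m1 * I1 - 1/m2 * I2\<bar> \<le> 2 * M * dl / m1"
    by (rule frac_diff_bound[OF m1 m2 dI bI2 dm M0])
  have trivial: "\<bar>1/m1 * I1 - 1/m2 * I2\<bar> \<le> 2 * M"
  proof -
    have "\<bar>1/m1 * I1\<bar> \<le> M" using bI1 m1 by (simp add: abs_mult field_simps)
    moreover have "\<bar>1/m2 * I2\<bar> \<le> M" using bI2 m2 by (simp add: abs_mult field_simps)
    ultimately show ?thesis by linarith
  qed
  have pw0: "0 \<le> (t / r1) powr \<theta>" by simp
  have goal: "\<bar>1/m1 * I1 - 1/m2 * I2\<bar> \<le> 32 * Dc * M * (t / r1) powr \<theta>"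
  proof (cases "t = 0")
    case True
    then have "x = y" "r1 = r2" using r(3) unfolding t_def by auto
    then have "1/m1 * I1 - 1/m2 * I2 = 0" unfolding m1_def m2_def I1_def I2_def A_def B_def by simp
    then show ?thesis using M0 D1 pw0 by simp
  next
    case False
    then have tpos: "0 < t" unfolding t_def by simp
    show ?thesis
    proof (cases "r1 \<le> 4 * t")
      case True
      have q: "1/4 \<le> t / r1" using True r(1) by (simp add: field_simps)
      have "1/4 \<le> (t / r1) powr \<theta>"
      proof (cases "t / r1 \<le> 1")
        case True
        then have "t / r1 \<le> (t / r1) powr \<theta>" using powr_mono'[of \<theta> 1 "t/r1"] th tpos r(1) by simp
        then show ?thesis using q by linarith
      next
        case False
        then have "1 \<le> (t / r1) powr \<theta>" using th by (intro ge_one_powr_ge_zero) auto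
        then show ?thesis by linarith
      qed
      then have h1: "M * (1/4) \<le> M * (t / r1) powr \<theta>" using M0 by (rule mult_left_mono)
      define q where "q = M * (t / r1) powr \<theta>"
      have q0: "0 \<le> q" unfolding q_def using M0 pw0 by simp
      have h2: "1 * q \<le> Dc * q" using D1 q0 by (rule mult_right_mono)
      have h3: "32 * Dc * M * (t / r1) powr \<theta> = 32 * (Dc * q)" unfolding q_def by (simp add: algebra_simps)
      have "2 * M \<le> 32 * Dc * M * (t / r1) powr \<theta>" unfolding h3 using h1 h2 M0 unfolding q_def by linarith
      then show ?thesis using trivial by linarith
    next
      case False
      define R where "R = r1 + 2 * t"
      define s where "s = 4 * t"
      have s: "0 < s" "s \<le> R" using tpos False unfolding s_def R_def by auto
      have sub: "(A - B) \<union> (B - A) \<subseteq> ball x R - ball x (R - s)"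
      proof
        fix z assume z: "z \<in> (A - B) \<union> (B - A)"
        have tri1: "dist x z \<le> dist x y + dist y z" by (rule dist_triangle)
        have tri2: "dist y z \<le> dist y x + dist x z" by (rule dist_triangle)
        have dxy: "dist y x = t" unfolding t_def by (simp add: dist_commute)
        have rr: "r1 - r2 \<le> t" "r2 - r1 \<le> t" using r(3) unfolding t_def by auto
        show "z \<in> ball x R - ball x (R - s)"
          using z tri1 tri2 dxy rr unfolding A_def B_def R_def s_def t_def by auto
      qed
      have "dl \<le> measure mu (ball x R - ball x (R - s))" unfolding dl_def A_def B_def
        using sub by (intro mono_meas) (auto simp: A_def B_def)
      also have "\<dots> \<le> 4 * (s/R) powr \<theta> * measure mu (ball x R)" using AD s by blast
      also have "\<dots> \<le> 4 * (4 * (t / r1) powr \<theta>) * (Dc * m1)"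
      proof (intro mult_mono mult_left_mono)
        have "(s/R) powr \<theta> \<le> (4 * (t / r1)) powr \<theta>"
          using s r(1) tpos th unfolding s_def R_def by (intro powr_mono2) (auto simp: field_simps)
        also have "\<dots> = 4 powr \<theta> * (t / r1) powr \<theta>" by (rule powr_mult)
        also have "\<dots> \<le> 4 * (t / r1) powr \<theta>"
        proof -
          have "4 powr \<theta> \<le> 4 powr 1" using th by (intro powr_mono) auto
          then show ?thesis using pw0 by (simp add: mult_right_mono)
        qed
        finally show "(s/R) powr \<theta> \<le> 4 * (t / r1) powr \<theta>" .
        have "measure mu (ball x R) \<le> measure mu (ball x (2 * r1))"
          using False tpos unfolding R_def by (intro mono_meas) auto
        also have "\<dots> \<le> Dc * m1" unfolding m1_def A_def by (rule dbl)
        finally show "measure mu (ball x R) \<le> Dc * m1" .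
      qed (use pw0 D1 m1 in auto)
      finally have "dl \<le> 16 * Dc * (t / r1) powr \<theta> * m1" by (simp add: algebra_simps)
      then have "2 * M * dl / m1 \<le> 2 * M * (16 * Dc * (t / r1) powr \<theta> * m1) / m1"
        using M0 m1 by (intro divide_right_mono mult_left_mono) auto
      also have "\<dots> = 32 * Dc * M * (t / r1) powr \<theta>" using m1 by simp
      finally show ?thesis using key by linarith
    qed
  qed
  then show ?thesis unfolding t_def m1_def m2_def I1_def I2_def A_def B_def .
qed

end

lemma inf_family:
  fixes f :: "'i \<Rightarrow> real \<Rightarrow> real"
  assumes I: "I \<noteq> {}"
    and cc: "\<And>i. i \<in> I \<Longrightarrow> concave_on {0..} (f i)"
    and mo: "\<And>i. i \<in> I \<Longrightarrow> mono_on {0..} (f i)"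
    and nn: "\<And>i t. i \<in> I \<Longrightarrow> 0 \<le> t \<Longrightarrow> 0 \<le> f i t"
  defines "F \<equiv> (\<lambda>t. Inf ((\<lambda>i. f i t) ` I))"
  shows "concave_on {0..} F" "mono_on {0..} F" "\<And>t. 0 \<le> t \<Longrightarrow> 0 \<le> F t"
    "\<And>i t. i \<in> I \<Longrightarrow> 0 \<le> t \<Longrightarrow> F t \<le> f i t"
proof -
  have bdd: "bdd_below ((\<lambda>i. f i t) ` I)" if "0 \<le> t" for t
    using nn that by (intro bdd_belowI[of _ 0]) auto
  show le: "\<And>i t. i \<in> I \<Longrightarrow> 0 \<le> t \<Longrightarrow> F t \<le> f i t"
    unfolding F_def using bdd by (intro cInf_lower) auto
  have ge: "c \<le> F t" if "\<And>i. i \<in> I \<Longrightarrow> c \<le> f i t" for c t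
    unfolding F_def using I that by (intro cInf_greatest) auto
  show "\<And>t. 0 \<le> t \<Longrightarrow> 0 \<le> F t" using ge nn by blast
  show "mono_on {0..} F"
  proof (rule mono_onI)
    fix a b :: real assume ab: "a \<in> {0..}" "b \<in> {0..}" "a \<le> b"
    show "F a \<le> F b"
    proof (rule ge)
      fix i assume i: "i \<in> I"
      have "F a \<le> f i a" using le[OF i] ab by auto
      also have "f i a \<le> f i b" by (rule mono_onD[OF mo[OF i]]) (use ab in auto)
      finally show "F a \<le> f i b" .
    qed
  qed
  show "concave_on {0..} F"
    unfolding concave_on_iff
  proof (intro conjI ballI allI impI)
    show "convex {0::real..}" by (rule convex_real_interval)
    fix x y :: real and u v :: real
    assume xy: "x \<in> {0..}" "y \<in> {0..}" and uv: "0 \<le> u" "0 \<le> v" "u + v = 1"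
    show "u * F x + v * F y \<le> F (u *\<^sub>R x + v *\<^sub>R y)"
    proof (rule ge)
      fix i assume i: "i \<in> I"
      have "u * F x + v * F y \<le> u * f i x + v * f i y"
        using le[OF i] xy uv by (intro add_mono mult_left_mono) auto
      also have "\<dots> \<le> f i (u *\<^sub>R x + v *\<^sub>R y)"
        using cc[OF i] xy uv unfolding concave_on_iff by blast
      finally show "u * F x + v * F y \<le> f i (u *\<^sub>R x + v *\<^sub>R y)" .
    qed
  qed
qed

lemma affine_concave:
  fixes a b :: real
  shows "concave_on {0..} (\<lambda>t. a + b * t)"
  unfolding concave_on_iff
proof (intro conjI ballI allI impI)
  show "convex {0::real..}" by (rule convex_real_interval)
  fix x y u v :: real assume "u + v = 1"
  then have v: "v = 1 - u" by simp
  show "u * (a + b * x) + v * (a + b * y) \<le> a + b * (u *\<^sub>R x + v *\<^sub>R y)"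
    unfolding v by (simp add: algebra_simps)
qed

lemma lm_eq:
  "lowest_modulus v E t = Inf ((\<lambda>w. w t) ` {w. concave_modulus w \<and> (\<forall>x\<in>E. \<forall>y\<in>E. \<bar>v x - v y\<bar> \<le> w (dist x y))})"
  unfolding lowest_modulus_def by (rule arg_cong[where f=Inf]) blast

lemma lowest_modulus_le:
  assumes "concave_modulus w" "\<forall>x\<in>E. \<forall>y\<in>E. \<bar>v x - v y\<bar> \<le> w (dist x y)" "0 \<le> t"
  shows "lowest_modulus v E t \<le> w t"
  unfolding lm_eq
proof (rule cInf_lower)
  show "w t \<in> (\<lambda>w. w t) ` {w. concave_modulus w \<and> (\<forall>x\<in>E. \<forall>y\<in>E. \<bar>v x - v y\<bar> \<le> w (dist x y))}"
    using assms(1,2) by blast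
  show "bdd_below ((\<lambda>w. w t) ` {w. concave_modulus w \<and> (\<forall>x\<in>E. \<forall>y\<in>E. \<bar>v x - v y\<bar> \<le> w (dist x y))})"
    using assms(3) by (intro bdd_belowI[of _ 0]) (auto simp: concave_modulus_def)
qed

lemma modulus_exists:
  fixes v :: "'a::euclidean_space \<Rightarrow> real"
  assumes uc: "uniformly_continuous_on E v" and B: "0 \<le> B" "\<And>x. x \<in> E \<Longrightarrow> \<bar>v x\<bar> \<le> B"
  shows "\<exists>w. concave_modulus w \<and> (\<forall>x\<in>E. \<forall>y\<in>E. \<bar>v x - v y\<bar> \<le> w (dist x y))"
proof -
  have "\<forall>n::nat. \<exists>d>0. \<forall>x\<in>E. \<forall>x'\<in>E. dist x' x < d \<longrightarrow> dist (v x') (v x) < 1 / (real n + 1)"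
    using uc unfolding uniformly_continuous_on_def by auto
  then obtain \<delta> where \<delta>: "\<And>n. \<delta> n > 0"
    "\<And>n x x'. x \<in> E \<Longrightarrow> x' \<in> E \<Longrightarrow> dist x' x < \<delta> n \<Longrightarrow> dist (v x') (v x) < 1 / (real n + 1)"
    by metis
  define f where "f n t = 1 / (real n + 1) + (2 * B / \<delta> n) * t" for n t
  define F where "F = (\<lambda>t. Inf ((\<lambda>n. f n t) ` (UNIV :: nat set)))"
  have cc: "concave_on {0..} (f n)" for n unfolding f_def by (rule affine_concave)
  have mo: "mono_on {0..} (f n)" for n
    unfolding f_def using B(1) \<delta>(1)[of n] by (intro mono_onI) (auto intro!: mult_left_mono divide_right_mono)
  have nn: "0 \<le> f n t" if "0 \<le> t" for n t
    unfolding f_def using B(1) \<delta>(1)[of n] that by simp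
  note fam = inf_family[of UNIV f, OF _ cc mo nn]
  have F0: "F 0 = 0"
  proof -
    have "F 0 \<le> 0"
    proof (rule ccontr)
      assume "\<not> F 0 \<le> 0"
      then have c: "0 < F 0" by simp
      obtain n :: nat where "1 / F 0 < real n + 1" using reals_Archimedean2 by (metis add.commute add_strict_increasing zero_less_one less_eq_real_def)
      then have "1 / (real n + 1) < F 0" using c by (simp add: field_simps)
      moreover have "F 0 \<le> f n 0" using fam(4)[of n 0] unfolding F_def by simp
      ultimately show False unfolding f_def by simp
    qed
    then show ?thesis using fam(3)[of 0] unfolding F_def by simp
  qed
  have cm: "concave_modulus F" unfolding concave_modulus_def using F0 unfolding F_def using fam by auto
  have md: "\<bar>v x - v y\<bar> \<le> F (dist x y)" if "x \<in> E" "y \<in> E" for x y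
    unfolding F_def
  proof (rule cInf_greatest)
    show "(\<lambda>n. f n (dist x y)) ` UNIV \<noteq> {}" by simp
    fix c assume "c \<in> (\<lambda>n. f n (dist x y)) ` UNIV"
    then obtain n where c: "c = f n (dist x y)" by auto
    show "\<bar>v x - v y\<bar> \<le> c"
    proof (cases "dist x y < \<delta> n")
      case True
      then have "dist (v x) (v y) < 1 / (real n + 1)" using \<delta>(2)[OF that(2) that(1)] by simp
      then have "\<bar>v x - v y\<bar> < 1 / (real n + 1)" by (simp add: dist_real_def)
      moreover have "0 \<le> (2 * B / \<delta> n) * dist x y" using B(1) \<delta>(1)[of n] by simp
      ultimately show ?thesis unfolding c f_def by linarith
    next
      case False
      have "\<bar>v x - v y\<bar> \<le> 2 * B" using B(2)[OF that(1)] B(2)[OF that(2)] by linarith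
      also have "2 * B = (2 * B / \<delta> n) * \<delta> n" using \<delta>(1)[of n] by simp
      also have "\<dots> \<le> (2 * B / \<delta> n) * dist x y"
        using False B(1) \<delta>(1)[of n] by (intro mult_left_mono) auto
      also have "\<dots> \<le> c" unfolding c f_def by simp
      finally show ?thesis .
    qed
  qed
  show ?thesis using cm md by blast
qed

lemma lowest_modulus_props:
  fixes v :: "'a::euclidean_space \<Rightarrow> real"
  assumes uc: "uniformly_continuous_on E v" and B: "0 \<le> B" "\<And>x. x \<in> E \<Longrightarrow> \<bar>v x\<bar> \<le> B"
  shows "concave_modulus (lowest_modulus v E)"
    "\<And>x y. x \<in> E \<Longrightarrow> y \<in> E \<Longrightarrow> \<bar>v x - v y\<bar> \<le> lowest_modulus v E (dist x y)"
proof -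
  define W where "W = {w. concave_modulus w \<and> (\<forall>x\<in>E. \<forall>y\<in>E. \<bar>v x - v y\<bar> \<le> w (dist x y))}"
  have W: "W \<noteq> {}" using modulus_exists[OF uc B] unfolding W_def by blast
  have L: "lowest_modulus v E = (\<lambda>t. Inf ((\<lambda>w. w t) ` W))"
    unfolding W_def by (rule ext) (rule lm_eq)
  have cm: "concave_on {0..} w" "mono_on {0..} w" "\<And>t. 0 \<le> t \<Longrightarrow> 0 \<le> w t" if "w \<in> W" for w
    using that unfolding W_def concave_modulus_def by auto
  have fam': "concave_on {0..} (lowest_modulus v E)" "mono_on {0..} (lowest_modulus v E)"
    "\<And>t. 0 \<le> t \<Longrightarrow> 0 \<le> lowest_modulus v E t"
    unfolding L
      apply (rule inf_family(1)[of W "\<lambda>w. w"]) using W cm apply auto[4]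
     apply (rule inf_family(2)[of W "\<lambda>w. w"]) using W cm apply auto[4]
    apply (rule inf_family(3)[of W "\<lambda>w. w"]) using W cm apply auto
    done
  have z: "lowest_modulus v E 0 = 0"
  proof -
    have "(\<lambda>w. w 0) ` W = {0}" using W unfolding W_def concave_modulus_def by auto
    then show ?thesis unfolding L by simp
  qed
  show "concave_modulus (lowest_modulus v E)" unfolding concave_modulus_def using fam' z by auto
  fix x y assume xy: "x \<in> E" "y \<in> E"
  show "\<bar>v x - v y\<bar> \<le> lowest_modulus v E (dist x y)"
    unfolding L using W xy by (intro cInf_greatest) (auto simp: W_def)
qed

lemma point_match:
  fixes x y z :: "'a::euclidean_space"
  assumes ry: "0 < ry" and r: "\<bar>rx - ry\<bar> \<le> dist x y" and z: "z \<in> ball x rx"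
  shows "\<exists>z'\<in>ball y ry. dist z z' \<le> dist x y + rx - ry"
proof -
  define t where "t = dist x y"
  define e where "e = t + rx - ry"
  have e0: "0 \<le> e" using r unfolding e_def t_def by auto
  define d where "d = dist y z"
  show ?thesis
  proof (cases "d < ry")
    case True
    then show ?thesis using e0 unfolding d_def e_def t_def by (intro bexI[of _ z]) auto
  next
    case False
    have dpos: "0 < d" using False ry by simp
    have "d \<le> dist y x + dist x z" unfolding d_def by (rule dist_triangle)
    then have dlt: "d < t + rx" using z unfolding t_def by (simp add: dist_commute)
    define \<rho> where "\<rho> = max 0 (d - e)"
    have \<rho>: "0 \<le> \<rho>" "\<rho> < ry" "\<rho> \<le> d" "d - e \<le> \<rho>" using dlt ry dpos e0 unfolding \<rho>_def e_def by auto
    define z' where "z' = y + (\<rho>/d) *\<^sub>R (z - y)"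
    have nd: "norm (z - y) = d" unfolding d_def by (simp add: dist_norm norm_minus_commute)
    have "dist y z' = \<bar>\<rho>/d\<bar> * d" unfolding z'_def dist_line0 nd ..
    also have "\<dots> = \<rho>" using dpos \<rho>(1) by simp
    finally have "z' \<in> ball y ry" using \<rho>(2) by simp
    moreover have "dist z z' = dist (y + 1 *\<^sub>R (z - y)) (y + (\<rho>/d) *\<^sub>R (z - y))" by (simp add: z'_def)
    moreover have "\<dots> = \<bar>1 - \<rho>/d\<bar> * d" unfolding dist_line nd ..
    moreover have "\<dots> = \<bar>(1 - \<rho>/d) * d\<bar>" using dpos by (simp add: abs_mult)
    moreover have "(1 - \<rho>/d) * d = d - \<rho>" using dpos by (simp add: left_diff_distrib)
    ultimately have "dist z z' = d - \<rho>" using \<rho>(3) by simp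
    then have "dist z z' \<le> e" using \<rho>(4) by simp
    then show ?thesis using \<open>z' \<in> ball y ry\<close> unfolding e_def t_def by blast
  qed
qed

lemma sup_inf_compare:
  fixes u :: "'a \<Rightarrow> real"
  assumes A: "A \<noteq> {}" and B: "B \<noteq> {}"
    and bA: "\<And>a. a \<in> A \<Longrightarrow> \<bar>u a\<bar> \<le> K" and bB: "\<And>b. b \<in> B \<Longrightarrow> \<bar>u b\<bar> \<le> K"
    and m: "\<And>a. a \<in> A \<Longrightarrow> \<exists>b\<in>B. \<bar>u a - u b\<bar> \<le> e"
  shows "Sup (u ` A) \<le> Sup (u ` B) + e" "Inf (u ` B) \<le> Inf (u ` A) + e"
proof -
  have ba: "bdd_above (u ` B)" using bB by (intro bdd_aboveI2[where M=K]) (auto simp: abs_le_iff)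
  have bb: "bdd_below (u ` B)" using bB by (intro bdd_belowI2[where m="-K"]) (force simp: abs_le_iff)
  show "Sup (u ` A) \<le> Sup (u ` B) + e"
  proof (rule cSUP_least[OF A])
    fix a assume a: "a \<in> A"
    then obtain b where b: "b \<in> B" "\<bar>u a - u b\<bar> \<le> e" using m by blast
    have "u b \<le> Sup (u ` B)" using ba b(1) by (rule cSUP_upper2) simp
    then show "u a \<le> Sup (u ` B) + e" using b(2) by linarith
  qed
  have "Inf (u ` B) - e \<le> Inf (u ` A)"
  proof (rule cINF_greatest[OF A])
    fix a assume a: "a \<in> A"
    then obtain b where b: "b \<in> B" "\<bar>u a - u b\<bar> \<le> e" using m by blast
    have "Inf (u ` B) \<le> u b" using bb b(1) by (rule cINF_lower2) simp
    then show "Inf (u ` B) - e \<le> u a" using b(2) by linarith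
  qed
  then show "Inf (u ` B) \<le> Inf (u ` A) + e" by linarith
qed

lemma avg_bound:
  fixes a b c d p q L :: real
  assumes "a \<le> b + p" "d \<le> c + p" "b \<le> a + q" "c \<le> d + q" "1/2 * p + 1/2 * q \<le> L"
  shows "\<bar>(a+c)/2 - (b+d)/2\<bar> \<le> L"
proof -
  have "(a+c)/2 - (b+d)/2 \<le> L" using assms by argo
  moreover have "(b+d)/2 - (a+c)/2 \<le> L" using assms by argo
  ultimately show ?thesis by (simp add: abs_le_iff)
qed

lemma S_diff:
  fixes u :: "'a::euclidean_space \<Rightarrow> real"
  assumes rx: "0 < r x" and ry: "0 < r y" and r: "\<bar>r x - r y\<bar> \<le> dist x y"
    and H: "ball x (r x) \<subseteq> H" "ball y (r y) \<subseteq> H"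
    and bnd: "\<And>z. z \<in> H \<Longrightarrow> \<bar>u z\<bar> \<le> K"
    and cm: "concave_modulus l"
    and mod: "\<And>a b. a \<in> H \<Longrightarrow> b \<in> H \<Longrightarrow> \<bar>u a - u b\<bar> \<le> l (dist a b)"
  shows "\<bar>S_op r u x - S_op r u y\<bar> \<le> l (dist x y)"
proof -
  define t where "t = dist x y"
  define e1 where "e1 = t + r x - r y"
  define e2 where "e2 = t + r y - r x"
  have e: "0 \<le> e1" "0 \<le> e2" using r unfolding e1_def e2_def t_def by auto
  have mono: "l a \<le> l b" if "0 \<le> a" "a \<le> b" for a b
    using cm that unfolding concave_modulus_def by (auto intro: mono_onD)
  have ne: "ball x (r x) \<noteq> {}" "ball y (r y) \<noteq> {}" using rx ry by auto
  have m1: "\<exists>b\<in>ball y (r y). \<bar>u a - u b\<bar> \<le> l e1" if a: "a \<in> ball x (r x)" for a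
  proof -
    obtain b where b: "b \<in> ball y (r y)" "dist a b \<le> e1"
      using point_match[OF ry r a] unfolding e1_def t_def by blast
    have "\<bar>u a - u b\<bar> \<le> l (dist a b)" using mod H a b(1) by blast
    also have "\<dots> \<le> l e1" using b(2) by (intro mono) auto
    finally show ?thesis using b(1) by blast
  qed
  have r': "\<bar>r y - r x\<bar> \<le> dist y x" using r by (simp add: dist_commute abs_minus_commute)
  have m2: "\<exists>b\<in>ball x (r x). \<bar>u a - u b\<bar> \<le> l e2" if a: "a \<in> ball y (r y)" for a
  proof -
    obtain b where b: "b \<in> ball x (r x)" "dist a b \<le> e2"
      using point_match[OF rx r' a] unfolding e2_def t_def by (auto simp: dist_commute)
    have "\<bar>u a - u b\<bar> \<le> l (dist a b)" using mod H a b(1) by blast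
    also have "\<dots> \<le> l e2" using b(2) by (intro mono) auto
    finally show ?thesis using b(1) by blast
  qed
  have bx: "\<And>a. a \<in> ball x (r x) \<Longrightarrow> \<bar>u a\<bar> \<le> K" and by': "\<And>a. a \<in> ball y (r y) \<Longrightarrow> \<bar>u a\<bar> \<le> K"
    using H bnd by auto
  note c1 = sup_inf_compare[OF ne(1) ne(2) bx by' m1]
  note c2 = sup_inf_compare[OF ne(2) ne(1) by' bx m2]
  have conc: "1/2 * l e1 + 1/2 * l e2 \<le> l t"
  proof -
    have "concave_on {0..} l" using cm unfolding concave_modulus_def by simp
    then have "(1 - 1/2) * l e1 + 1/2 * l e2 \<le> l ((1 - 1/2) *\<^sub>R e1 + (1/2) *\<^sub>R e2)"
      using e by (intro concave_onD) auto
    moreover have "(1 - 1/2) *\<^sub>R e1 + (1/2) *\<^sub>R e2 = t" unfolding e1_def e2_def by (simp add: field_simps)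
    ultimately show ?thesis by simp
  qed
  have f1: "Sup (u ` ball x (r x)) \<le> Sup (u ` ball y (r y)) + l e1" "Inf (u ` ball y (r y)) \<le> Inf (u ` ball x (r x)) + l e1"
    using c1 by simp_all
  have f2: "Sup (u ` ball y (r y)) \<le> Sup (u ` ball x (r x)) + l e2" "Inf (u ` ball x (r x)) \<le> Inf (u ` ball y (r y)) + l e2"
    using c2 by simp_all
  show ?thesis unfolding S_op_def t_def by (rule avg_bound[OF f1(1) f1(2) f2(1) f2(2) conc[unfolded t_def]])
qed

lemma powr_concave_pos:
  assumes "0 < th" "th \<le> 1"
  shows "concave_on {0<..} (\<lambda>x::real. x powr th)"
proof (rule f''_le0_imp_concave[where f' = "\<lambda>x. th * x powr (th - 1)" and f'' = "\<lambda>x. th * ((th - 1) * x powr (th - 1 - 1))"])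
  show "convex {0::real<..}" by (rule convex_real_interval)
  fix x :: real assume x: "x \<in> {0<..}"
  show "((\<lambda>x. x powr th) has_real_derivative th * x powr (th - 1)) (at x)"
    using x by (intro derivative_eq_intros) auto
  show "((\<lambda>x. th * x powr (th - 1)) has_real_derivative th * ((th - 1) * x powr (th - 1 - 1))) (at x)"
    using x by (intro derivative_eq_intros) auto
  show "th * ((th - 1) * x powr (th - 1 - 1)) \<le> 0"
    using assms x by (intro mult_nonneg_nonpos mult_nonpos_nonneg) auto
qed

lemma powr_concave:
  assumes "0 < th" "th \<le> 1"
  shows "concave_on {0..} (\<lambda>x::real. x powr th)"
  unfolding concave_on_iff
proof (intro conjI ballI allI impI)
  show "convex {0::real..}" by (rule convex_real_interval)
  fix x y u v :: real assume xy: "x \<in> {0..}" "y \<in> {0..}" and uv: "0 \<le> u" "0 \<le> v" "u + v = 1"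
  have small: "a \<le> a powr th" if "0 \<le> a" "a \<le> 1" for a
    using powr_mono'[of th 1 a] that assms by simp
  show "u * x powr th + v * y powr th \<le> (u *\<^sub>R x + v *\<^sub>R y) powr th"
  proof (cases "x = 0")
    case True
    have "v * y powr th \<le> v powr th * y powr th"
      using small[of v] uv by (intro mult_right_mono) auto
    also have "\<dots> = (v * y) powr th" using uv xy by (simp add: powr_mult)
    finally show ?thesis using True assms by simp
  next
    case False
    show ?thesis
    proof (cases "y = 0")
      case True
      have "u * x powr th \<le> u powr th * x powr th"
        using small[of u] uv by (intro mult_right_mono) auto
      also have "\<dots> = (u * x) powr th" using uv xy by (simp add: powr_mult)
      finally show ?thesis using True assms by simp
    next
      case False
      have "x \<in> {0<..}" "y \<in> {0<..}" using xy \<open>x \<noteq> 0\<close> False by auto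
      then show ?thesis using powr_concave_pos[OF assms] uv unfolding concave_on_iff by blast
    qed
  qed
qed

lemma dbl_from:
  fixes mu :: "'a::euclidean_space measure"
  assumes "doubling_measure mu"
  shows "\<exists>D. dbl mu D"
proof -
  have se: "sets mu = sets borel"
    and pf: "\<And>a s. s > 0 \<Longrightarrow> 0 < emeasure mu (ball a s) \<and> emeasure mu (ball a s) < \<infinity>"
    using assms unfolding doubling_measure_def by auto
  obtain D :: real where D: "D \<ge> 1" "\<And>a s. s > 0 \<Longrightarrow> emeasure mu (ball a (2 * s)) \<le> ennreal D * emeasure mu (ball a s)"
    using assms unfolding doubling_measure_def by auto
  have fin: "emeasure mu (ball a s) < \<infinity>" for a s
    using pf[of s a] by (cases "s > 0") (auto simp: not_less ball_empty)
  have eq: "emeasure mu (ball a s) = ennreal (measure mu (ball a s))" for a s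
    using fin[of a s] by (intro emeasure_eq_ennreal_measure) auto
  have pos: "0 < measure mu (ball a s)" if "s > 0" for a s
    using pf[OF that, of a] eq[of a s] by simp
  have dbl: "measure mu (ball a (2 * s)) \<le> D * measure mu (ball a s)" for a s
  proof (cases "s > 0")
    case True
    have "ennreal (measure mu (ball a (2 * s))) \<le> ennreal D * ennreal (measure mu (ball a s))"
      using D(2)[OF True, of a] eq by simp
    also have "\<dots> = ennreal (D * measure mu (ball a s))" using D(1) by (simp add: ennreal_mult)
    finally show ?thesis using D(1) by (subst (asm) ennreal_le_iff) auto
  next
    case False
    then have "ball a (2 * s) = {}" "ball a s = {}" by (auto intro: ball_empty)
    then show ?thesis by (simp del: ball_eq_empty)
  qed
  show ?thesis unfolding dbl_def using se fin pos D(1) dbl by blast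
qed

lemma ball_in_Omega:
  fixes Omega :: "'a::euclidean_space set"
  assumes "open Omega" "admissible_radius Omega r" "x \<in> Omega"
  shows "ball x (r x) \<subseteq> Omega"
proof (rule ccontr)
  assume "\<not> ?thesis"
  then have "ball x (r x) - Omega \<noteq> {}" by blast
  moreover have "ball x (r x) \<inter> Omega \<noteq> {}" using assms(2,3) unfolding admissible_radius_def by force
  ultimately have "ball x (r x) \<inter> frontier Omega \<noteq> {}"
    using connected_Int_frontier[OF connected_ball] by blast
  then obtain p where p: "p \<in> ball x (r x)" "p \<in> frontier Omega" by blast
  have "infdist x (frontier Omega) \<le> dist x p" using p(2) by (rule infdist_le)
  moreover have "r x \<le> infdist x (frontier Omega)" using assms(2,3) unfolding admissible_radius_def by blast
  ultimately show False using p(1) by simp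
qed

lemma comb_bound:
  fixes \<alpha> a1 a2 b1 b2 A B :: real
  assumes "0 \<le> \<alpha>" "\<alpha> \<le> 1" "\<bar>a1 - a2\<bar> \<le> A" "\<bar>b1 - b2\<bar> \<le> B"
  shows "\<bar>(\<alpha> * a1 + (1 - \<alpha>) * b1) - (\<alpha> * a2 + (1 - \<alpha>) * b2)\<bar> \<le> \<alpha> * A + (1 - \<alpha>) * B"
proof -
  have "(\<alpha> * a1 + (1 - \<alpha>) * b1) - (\<alpha> * a2 + (1 - \<alpha>) * b2) = \<alpha> * (a1 - a2) + (1 - \<alpha>) * (b1 - b2)"
    by (simp add: algebra_simps)
  also have "\<bar>\<dots>\<bar> \<le> \<bar>\<alpha> * (a1 - a2)\<bar> + \<bar>(1 - \<alpha>) * (b1 - b2)\<bar>" by (rule abs_triangle_ineq)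
  also have "\<dots> = \<alpha> * \<bar>a1 - a2\<bar> + (1 - \<alpha>) * \<bar>b1 - b2\<bar>" using assms(1,2) by (simp add: abs_mult)
  also have "\<dots> \<le> \<alpha> * A + (1 - \<alpha>) * B" using assms by (intro add_mono mult_left_mono) auto
  finally show ?thesis .
qed

theorem proposition2p1:
  fixes mu :: "'a::euclidean_space measure"
  assumes "doubling_measure mu"
  shows "\<exists>C::real. C > 0 \<and> (\<exists>\<theta>::real. 0 < \<theta> \<and> \<theta> \<le> 1 \<and>
    (\<forall>(Omega::'a set) (r::'a \<Rightarrow> real) (\<alpha>::real) (u::'a \<Rightarrow> real) (G::'a set).
       open Omega \<and> connected Omega \<and> Omega \<noteq> {} \<and> bounded Omega \<and> convex Omega \<and>
       admissible_radius Omega r \<and>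
       (\<forall>x\<in>Omega. \<forall>y\<in>Omega. \<bar>r x - r y\<bar> \<le> dist x y) \<and>
       0 \<le> \<alpha> \<and> \<alpha> < 1 \<and>
       continuous_on (closure Omega) u \<and>
       open G \<and> connected G \<and> G \<noteq> {} \<and> convex G \<and> G \<subset> Omega \<and>
       closure G \<subseteq> Omega \<and> compact (closure G)
     \<longrightarrow>
       (\<forall>x\<in>G. \<forall>y\<in>G.
          \<bar>T_op mu r \<alpha> u x - T_op mu r \<alpha> u y\<bar>
            \<le> \<alpha> * lowest_modulus u (convex hull (\<Union>z\<in>G. ball z (r z))) (dist x y)
              + (1 - \<alpha>) * C * sup_norm_on (closure Omega) u * (dist x y / r x) powr \<theta>)
       \<and>
       (\<forall>t1>0. (\<forall>x\<in>G. t1 \<le> r x) \<longrightarrow>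
          (\<forall>t. 0 \<le> t \<and> t \<le> diameter G \<longrightarrow>
             lowest_modulus (T_op mu r \<alpha> u) G t
               \<le> \<alpha> * lowest_modulus u (convex hull (\<Union>z\<in>G. ball z (r z))) t
                 + (1 - \<alpha>) * C * sup_norm_on (closure Omega) u * t1 powr (- \<theta>) * t powr \<theta>))))"
proof -
  obtain Dc where dm: "dbl mu Dc" using dbl_from[OF assms] by blast
  interpret dbl mu Dc by (rule dm)
  obtain \<theta> where th: "0 < \<theta>" "\<theta> \<le> 1" and AD: "\<forall>x R s. 0 < s \<longrightarrow> s \<le> R \<longrightarrow>
      measure mu (ball x R - ball x (R - s)) \<le> 4 * (s/R) powr \<theta> * measure mu (ball x R)"
    using annular_decay by blast
  define C where "C = 32 * Dc"
  have C: "C > 0" using D1 unfolding C_def by simp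
  have main: "\<forall>(Omega::'a set) (r::'a \<Rightarrow> real) (\<alpha>::real) (u::'a \<Rightarrow> real) (G::'a set).
       open Omega \<and> connected Omega \<and> Omega \<noteq> {} \<and> bounded Omega \<and> convex Omega \<and>
       admissible_radius Omega r \<and>
       (\<forall>x\<in>Omega. \<forall>y\<in>Omega. \<bar>r x - r y\<bar> \<le> dist x y) \<and>
       0 \<le> \<alpha> \<and> \<alpha> < 1 \<and>
       continuous_on (closure Omega) u \<and>
       open G \<and> connected G \<and> G \<noteq> {} \<and> convex G \<and> G \<subset> Omega \<and>
       closure G \<subseteq> Omega \<and> compact (closure G)
     \<longrightarrow>
       (\<forall>x\<in>G. \<forall>y\<in>G.
          \<bar>T_op mu r \<alpha> u x - T_op mu r \<alpha> u y\<bar>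
            \<le> \<alpha> * lowest_modulus u (convex hull (\<Union>z\<in>G. ball z (r z))) (dist x y)
              + (1 - \<alpha>) * C * sup_norm_on (closure Omega) u * (dist x y / r x) powr \<theta>)
       \<and>
       (\<forall>t1>0. (\<forall>x\<in>G. t1 \<le> r x) \<longrightarrow>
          (\<forall>t. 0 \<le> t \<and> t \<le> diameter G \<longrightarrow>
             lowest_modulus (T_op mu r \<alpha> u) G t
               \<le> \<alpha> * lowest_modulus u (convex hull (\<Union>z\<in>G. ball z (r z))) t
                 + (1 - \<alpha>) * C * sup_norm_on (closure Omega) u * t1 powr (- \<theta>) * t powr \<theta>))"
  proof (intro allI impI)
    fix Omega :: "'a set" and r :: "'a \<Rightarrow> real" and \<alpha> :: real and u :: "'a \<Rightarrow> real" and G :: "'a set"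
    assume hy: "open Omega \<and> connected Omega \<and> Omega \<noteq> {} \<and> bounded Omega \<and> convex Omega \<and>
       admissible_radius Omega r \<and>
       (\<forall>x\<in>Omega. \<forall>y\<in>Omega. \<bar>r x - r y\<bar> \<le> dist x y) \<and>
       0 \<le> \<alpha> \<and> \<alpha> < 1 \<and>
       continuous_on (closure Omega) u \<and>
       open G \<and> connected G \<and> G \<noteq> {} \<and> convex G \<and> G \<subset> Omega \<and>
       closure G \<subseteq> Omega \<and> compact (closure G)"
    have oO: "open Omega" and neO: "Omega \<noteq> {}" and bO: "bounded Omega" and cO: "convex Omega"
      and adm: "admissible_radius Omega r" and lip: "\<forall>x\<in>Omega. \<forall>y\<in>Omega. \<bar>r x - r y\<bar> \<le> dist x y"
      and a0: "0 \<le> \<alpha>" and a1: "\<alpha> < 1" and uc: "continuous_on (closure Omega) u"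
      and GO: "G \<subset> Omega"
      using hy by blast+
    let ?H = "convex hull (\<Union>z\<in>G. ball z (r z))"
    let ?l = "lowest_modulus u ?H"
    let ?Mn = "sup_norm_on (closure Omega) u"
    have cpt: "compact (closure Omega)" using bO by (simp add: compact_closure)
    have bddabs: "bdd_above ((\<lambda>x. \<bar>u x\<bar>) ` closure Omega)"
      using cpt uc by (intro bounded_imp_bdd_above compact_imp_bounded compact_continuous_image continuous_on_rabs)
    have ub: "\<bar>u z\<bar> \<le> ?Mn" if "z \<in> closure Omega" for z
      unfolding sup_norm_on_def using bddabs that by (rule cSUP_upper2) simp
    obtain z0 where "z0 \<in> Omega" using neO by blast
    then have Mn0: "0 \<le> ?Mn" using ub[of z0] closure_subset by fastforce
    have rpos: "0 < r x" if "x \<in> Omega" for x using adm that unfolding admissible_radius_def by blast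
    have balls: "ball x (r x) \<subseteq> Omega" if "x \<in> Omega" for x by (rule ball_in_Omega[OF oO adm that])
    have GO': "G \<subseteq> Omega" using GO by blast
    have HO: "?H \<subseteq> Omega"
      using balls GO' cO by (intro hull_minimal) auto
    have HcO: "?H \<subseteq> closure Omega" using HO closure_subset by blast
    have bG: "ball x (r x) \<subseteq> ?H" if "x \<in> G" for x
    proof -
      have "ball x (r x) \<subseteq> (\<Union>z\<in>G. ball z (r z))" using that by blast
      also have "\<dots> \<subseteq> ?H" by (rule hull_subset)
      finally show ?thesis .
    qed
    have ucH: "uniformly_continuous_on ?H u"
      using compact_uniformly_continuous[OF uc cpt] HcO unfolding uniformly_continuous_on_def by (meson subsetD)
    have ubO: "\<And>z. z \<in> Omega \<Longrightarrow> \<bar>u z\<bar> \<le> ?Mn" using ub closure_subset by blast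
    have ubH: "\<And>z. z \<in> ?H \<Longrightarrow> \<bar>u z\<bar> \<le> ?Mn" using ub HcO by blast
    have lp: "concave_modulus ?l" "\<And>a b. a \<in> ?H \<Longrightarrow> b \<in> ?H \<Longrightarrow> \<bar>u a - u b\<bar> \<le> ?l (dist a b)"
      using lowest_modulus_props[OF ucH Mn0 ubH] by blast+
    have integ: "set_integrable mu (ball x (r x)) u" if "x \<in> Omega" for x
      unfolding set_integrable_def
    proof (rule integrableI_bounded_set[where A="ball x (r x)" and B="?Mn"])
      show "ball x (r x) \<in> sets mu" by simp
      have "continuous_on (ball x (r x)) u"
        by (rule continuous_on_subset[OF uc]) (use balls[OF that] closure_subset in blast)
      then have "(\<lambda>z. indicator (ball x (r x)) z *\<^sub>R u z) \<in> borel_measurable borel"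
        by (intro borel_measurable_continuous_on_indicator) auto
      then show "(\<lambda>z. indicator (ball x (r x)) z *\<^sub>R u z) \<in> borel_measurable mu"
        unfolding measurable_cong_sets[OF sets_eq refl] .
      show "emeasure mu (ball x (r x)) < \<infinity>" by (rule fin)
      show "AE z in mu. z \<in> ball x (r x) \<longrightarrow> norm (indicator (ball x (r x)) z *\<^sub>R u z) \<le> ?Mn"
      proof (rule AE_I2, rule impI)
        fix z assume "z \<in> ball x (r x)"
        then have "z \<in> closure Omega" using balls[OF that] closure_subset by blast
        then show "norm (indicator (ball x (r x)) z *\<^sub>R u z) \<le> ?Mn"
          using ub[of z] Mn0 by (auto simp: indicator_def)
      qed
      show "AE z in mu. z \<notin> ball x (r x) \<longrightarrow> indicator (ball x (r x)) z *\<^sub>R u z = 0"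
        by (intro AE_I2) auto
    qed
    have P1: "\<bar>T_op mu r \<alpha> u x - T_op mu r \<alpha> u y\<bar>
            \<le> \<alpha> * ?l (dist x y) + (1 - \<alpha>) * C * ?Mn * (dist x y / r x) powr \<theta>" if xy: "x \<in> G" "y \<in> G" for x y
    proof -
      have xO: "x \<in> Omega" and yO: "y \<in> Omega" using xy GO' by auto
      have lxy: "\<bar>r x - r y\<bar> \<le> dist x y" using lip xO yO by blast
      have bxy: "\<bar>u z\<bar> \<le> ?Mn" if "z \<in> ball x (r x) \<union> ball y (r y)" for z
      proof -
        have "z \<in> Omega" using that balls[OF xO] balls[OF yO] by blast
        then show ?thesis by (rule ubO)
      qed
      have Sd: "\<bar>S_op r u x - S_op r u y\<bar> \<le> ?l (dist x y)"
        by (rule S_diff[OF rpos[OF xO] rpos[OF yO] lxy bG[OF xy(1)] bG[OF xy(2)] ubH lp(1) lp(2)])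
      have Md: "\<bar>M_op mu r u x - M_op mu r u y\<bar> \<le> 32 * Dc * ?Mn * (dist x y / r x) powr \<theta>"
        unfolding M_op_def
        by (rule M_diff[OF th AD rpos[OF xO] rpos[OF yO] lxy integ[OF xO] integ[OF yO] bxy])
      have "\<bar>T_op mu r \<alpha> u x - T_op mu r \<alpha> u y\<bar> \<le> \<alpha> * ?l (dist x y) + (1 - \<alpha>) * (32 * Dc * ?Mn * (dist x y / r x) powr \<theta>)"
        unfolding T_op_def using a0 a1 Sd Md by (intro comb_bound) auto
      also have "\<dots> = \<alpha> * ?l (dist x y) + (1 - \<alpha>) * C * ?Mn * (dist x y / r x) powr \<theta>"
        unfolding C_def by (simp add: mult.assoc)
      finally show ?thesis .
    qed
    have P2: "lowest_modulus (T_op mu r \<alpha> u) G t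
               \<le> \<alpha> * ?l t + (1 - \<alpha>) * C * ?Mn * t1 powr (- \<theta>) * t powr \<theta>"
      if t1: "t1 > 0" "\<forall>x\<in>G. t1 \<le> r x" and t: "0 \<le> t" for t1 t
    proof -
      define K2 where "K2 = (1 - \<alpha>) * C * ?Mn * t1 powr (- \<theta>)"
      have K2: "0 \<le> K2" unfolding K2_def using a1 C Mn0 by simp
      define w where "w = (\<lambda>t. \<alpha> * ?l t + K2 * t powr \<theta>)"
      have lc: "concave_on {0..} ?l" "mono_on {0..} ?l" "?l 0 = 0" "\<And>t. 0 \<le> t \<Longrightarrow> 0 \<le> ?l t"
        using lp(1) unfolding concave_modulus_def by auto
      have cw: "concave_modulus w"
        unfolding concave_modulus_def
      proof (intro conjI allI impI)
        show "concave_on {0..} w" unfolding w_def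
          using a0 K2 lc(1) powr_concave[OF th] by (intro concave_on_add concave_on_cmul) auto
        show "mono_on {0..} w" unfolding w_def
        proof (rule mono_onI)
          fix a b :: real assume ab: "a \<in> {0..}" "b \<in> {0..}" "a \<le> b"
          have "?l a \<le> ?l b" using lc(2) ab by (auto intro: mono_onD)
          moreover have "a powr \<theta> \<le> b powr \<theta>" using ab th by (intro powr_mono2) auto
          ultimately show "\<alpha> * ?l a + K2 * a powr \<theta> \<le> \<alpha> * ?l b + K2 * b powr \<theta>"
            using a0 K2 by (intro add_mono mult_left_mono) auto
        qed
        show "w 0 = 0" unfolding w_def using lc(3) by simp
        fix s :: real assume "0 \<le> s"
        then show "0 \<le> w s" unfolding w_def using a0 K2 lc(4) by simp
      qed
      have mw: "\<forall>x\<in>G. \<forall>y\<in>G. \<bar>T_op mu r \<alpha> u x - T_op mu r \<alpha> u y\<bar> \<le> w (dist x y)"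
      proof (intro ballI)
        fix x y assume xy: "x \<in> G" "y \<in> G"
        have rx: "t1 \<le> r x" using t1 xy by blast
        have "(dist x y / r x) powr \<theta> \<le> (dist x y / t1) powr \<theta>"
          using th t1(1) rx by (intro powr_mono2 divide_left_mono) auto
        also have "\<dots> = t1 powr (- \<theta>) * dist x y powr \<theta>"
          by (simp add: powr_divide powr_minus_divide)
        finally have p: "(dist x y / r x) powr \<theta> \<le> t1 powr (- \<theta>) * dist x y powr \<theta>" .
        have "(1 - \<alpha>) * C * ?Mn * (dist x y / r x) powr \<theta> \<le> (1 - \<alpha>) * C * ?Mn * (t1 powr (- \<theta>) * dist x y powr \<theta>)"
          using p a1 C Mn0 by (intro mult_left_mono) auto
        also have "\<dots> = K2 * dist x y powr \<theta>" unfolding K2_def by (simp add: mult.assoc)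
        finally have "(1 - \<alpha>) * C * ?Mn * (dist x y / r x) powr \<theta> \<le> K2 * dist x y powr \<theta>" .
        then show "\<bar>T_op mu r \<alpha> u x - T_op mu r \<alpha> u y\<bar> \<le> w (dist x y)"
          using P1[OF xy] unfolding w_def by linarith
      qed
      have "lowest_modulus (T_op mu r \<alpha> u) G t \<le> w t" by (rule lowest_modulus_le[OF cw mw t])
      also have "w t = \<alpha> * ?l t + (1 - \<alpha>) * C * ?Mn * t1 powr (- \<theta>) * t powr \<theta>"
        unfolding w_def K2_def by simp
      finally show ?thesis .
    qed
    show "(\<forall>x\<in>G. \<forall>y\<in>G. \<bar>T_op mu r \<alpha> u x - T_op mu r \<alpha> u y\<bar>
            \<le> \<alpha> * ?l (dist x y) + (1 - \<alpha>) * C * ?Mn * (dist x y / r x) powr \<theta>)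
       \<and> (\<forall>t1>0. (\<forall>x\<in>G. t1 \<le> r x) \<longrightarrow>
          (\<forall>t. 0 \<le> t \<and> t \<le> diameter G \<longrightarrow>
             lowest_modulus (T_op mu r \<alpha> u) G t \<le> \<alpha> * ?l t + (1 - \<alpha>) * C * ?Mn * t1 powr (- \<theta>) * t powr \<theta>))"
      using P1 P2 by blast
  qed
  show ?thesis
    apply (rule exI[of _ C])
    apply (rule conjI[OF C])
    apply (rule exI[of _ \<theta>])
    apply (rule conjI[OF th(1)])
    apply (rule conjI[OF th(2)])
    apply (rule main)
    done
qed

end
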